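(* In the setting of the context, with step sizes $\alpha_k=\frac{a}{b+k}$ where $a>0$, $b>1$ and $\frac ab\le\frac1{2M\tilde L}$, for every $n\ge0$ and $0\le k\le n$, $$B_k\le\frac{a^2M\tilde Lc(A)\sigma_{\max}^2}{b+k-1}\Big(\frac{b+k+1}{b+n+1}\Big)^{a\sigma_{\min}^2}.$$
   Context: Standing setting: $M\ge N$, $A\in\mathbb{R}^{M\times N}$ of full column rank with rows $a_1,\dots,a_M$; singular values $\sigma_1\ge\dots\ge\sigma_N>0$, $\sigma_{\max}=\sigma_1$, $\sigma_{\min}=\sigma_N$, $c(A)=\sigma_{\max}^2/\sigma_{\min}^2$, $\tilde L=\max_i\|a_i\|^2$. Fix $\ell\in\{1,\dots,N\}$. For $\alpha>0$ put $A(\alpha)=1-2\alpha\sigma_\ell^2$, $B(\alpha)=\alpha^2M\tilde Lc(A)\sigma_{\max}^2$, $p(\alpha)=1-\alpha\sigma_{\min}^2$. For fixed $n$ and $0\le k\le n$: $B_k=\sum_{j=k}^n\Big(\prod_{i=j+1}^nA(\alpha_i)\Big)B(\alpha_j)\Big(\prod_{i=k}^{j-1}p(\alpha_i)\Big)$ (empty products equal $1$). (The scalars $a,b$ in the step size are unrelated to the rows $a_i$.) *)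

theory Defs
  imports Complex_Main "Jordan_Normal_Form.Matrix"
begin

definition is_singular_values :: "real mat \<Rightarrow> nat \<Rightarrow> nat \<Rightarrow> (nat \<Rightarrow> real) \<Rightarrow> bool" where
  "is_singular_values A M N sig \<longleftrightarrow>
     (\<forall>i j. 1 \<le> i \<longrightarrow> i \<le> j \<longrightarrow> j \<le> N \<longrightarrow> sig j \<le> sig i) \<and>
     (\<forall>i. 1 \<le> i \<longrightarrow> i \<le> N \<longrightarrow> 0 \<le> sig i) \<and>
     (\<exists>U V. U \<in> carrier_mat M M \<and> V \<in> carrier_mat N N \<and>
        transpose_mat U * U = 1\<^sub>m M \<and> transpose_mat V * V = 1\<^sub>m N \<and>
        A = U * mat M N (\<lambda>(i, j). if i = j then sig (i + 1) else 0) * transpose_mat V)"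

definition full_column_rank :: "real mat \<Rightarrow> bool" where
  "full_column_rank A \<longleftrightarrow>
     (\<forall>x \<in> carrier_vec (dim_col A). A *\<^sub>v x = 0\<^sub>v (dim_row A) \<longrightarrow> x = 0\<^sub>v (dim_col A))"

definition max_row_sq :: "real mat \<Rightarrow> real" where
  "max_row_sq A = Max ((\<lambda>i. row A i \<bullet> row A i) ` {0..<dim_row A})"

definition Bsum :: "(nat \<Rightarrow> real) \<Rightarrow> (real \<Rightarrow> real) \<Rightarrow> (real \<Rightarrow> real) \<Rightarrow> (real \<Rightarrow> real)
                     \<Rightarrow> nat \<Rightarrow> nat \<Rightarrow> real" where
  "Bsum \<alpha> Af Bf pf n k =
     (\<Sum>j=k..n. (\<Prod>i=j+1..n. Af (\<alpha> i)) * Bf (\<alpha> j) * (\<Prod>i=k..<j. pf (\<alpha> i)))"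

end

theory Submission
  imports Defs
begin


lemma ln_tail1:
  fixes b :: real assumes b: "b > 1" and kj: "k \<le> j"
  shows "ln (b + real j + 1) - ln (b + real k + 1) \<le> (\<Sum>i=k..<j. 1 / (b + real i))"
  using kj
proof (induction j rule: dec_induct)
  case base then show ?case by simp
next
  case (step j)
  have "ln (b + real (Suc j) + 1) - ln (b + real j + 1) = ln ((b + real j + 2) / (b + real j + 1))"
    using b by (simp add: ln_div add.commute add.left_commute)
  also have "\<dots> \<le> (b + real j + 2) / (b + real j + 1) - 1"
    using b by (intro ln_le_minus_one) auto
  also have "\<dots> = 1 / (b + real j + 1)" using b by (simp add: field_simps)
  also have "\<dots> \<le> 1 / (b + real j)" using b by (intro divide_left_mono) auto
  finally show ?case using step by simp
qed

lemma ln_tail2: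
  fixes b :: real assumes b: "b > 1" and kj: "j \<le> n"
  shows "ln (b + real n + 1) - ln (b + real j + 1) \<le> (\<Sum>i=j+1..n. 1 / (b + real i))"
  using kj
proof (induction n rule: dec_induct)
  case base then show ?case by simp
next
  case (step n)
  have "ln (b + real (Suc n) + 1) - ln (b + real n + 1) = ln ((b + real n + 2) / (b + real n + 1))"
    using b by (simp add: ln_div add.commute add.left_commute)
  also have "\<dots> \<le> (b + real n + 2) / (b + real n + 1) - 1"
    using b by (intro ln_le_minus_one) auto
  also have "\<dots> = 1 / (b + real (Suc n))" using b by (simp add: field_simps)
  finally have "ln (b + real (Suc n) + 1) - ln (b + real n + 1) \<le> 1 / (b + real (Suc n))" .
  moreover have "(\<Sum>i=j+1..Suc n. 1 / (b + real i)) = (\<Sum>i=j+1..n. 1 / (b + real i)) + 1 / (b + real (Suc n))"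
    using step by (simp add: sum.cl_ivl_Suc)
  ultimately show ?case using step by linarith
qed

lemma sq_sum:
  fixes b :: real assumes b: "b > 1" and kn: "k \<le> n"
  shows "(\<Sum>j=k..n. 1 / (b + real j)^2) \<le> 1 / (b + real k - 1) - 1 / (b + real n)"
  using kn
proof (induction n rule: dec_induct)
  case base
  have "1 / (b + real k)^2 \<le> 1 / ((b + real k - 1) * (b + real k))"
    using b by (intro divide_left_mono) (auto simp: power2_eq_square intro!: mult_pos_pos)
  also have "\<dots> = 1 / (b + real k - 1) - 1 / (b + real k)" using b by (simp add: field_simps)
  finally show ?case by simp
next
  case (step n)
  have "1 / (b + real (Suc n))^2 \<le> 1 / ((b + real n) * (b + real (Suc n)))"
    using b by (intro divide_left_mono) (auto simp: power2_eq_square intro!: mult_pos_pos)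
  also have "\<dots> = 1 / (b + real n) - 1 / (b + real (Suc n))" using b by (simp add: field_simps)
  finally show ?case using step by (simp add: sum.cl_ivl_Suc)
qed



lemma prod_exp_bound:
  fixes f g :: "nat \<Rightarrow> real"
  assumes "finite I" "\<And>i. i \<in> I \<Longrightarrow> 0 \<le> f i \<and> f i \<le> exp (g i)"
  shows "(\<Prod>i\<in>I. f i) \<le> exp (\<Sum>i\<in>I. g i)"
  using assms by (simp add: exp_sum prod_mono)

lemma main_bound:
  fixes a b s m C :: real and n k :: nat
  assumes a: "a > 0" and b: "b > 1" and m0: "0 \<le> m" and ms: "m \<le> s"
    and sb: "2 * (a / b) * s \<le> 1" and C: "C \<ge> 0" and kn: "k \<le> n"
  shows "(\<Sum>j=k..n. (\<Prod>i=j+1..n. 1 - 2 * (a / (b + real i)) * s) * ((a / (b + real j))^2 * C)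
            * (\<Prod>i=k..<j. 1 - (a / (b + real i)) * m))
         \<le> a^2 * C / (b + real k - 1) * ((b + real k + 1) / (b + real n + 1)) powr (a * m)"
proof -
  define al where "al i = a / (b + real i)" for i :: nat
  define E where "E = exp (- (a * m) * (ln (b + real n + 1) - ln (b + real k + 1)))"
  have al_le: "al i \<le> a / b" for i unfolding al_def using a b by (intro divide_left_mono) auto
  have al_pos: "al i > 0" for i unfolding al_def using a b by auto
  have s0: "s \<ge> 0" using m0 ms by linarith
  have alS: "2 * al i * s \<le> 1" for i
  proof -
    have "2 * al i * s \<le> 2 * (a / b) * s" using al_le[of i] s0 by (intro mult_right_mono) auto
    then show ?thesis using sb by linarith
  qed
  have f1: "0 \<le> 1 - 2 * al i * s \<and> 1 - 2 * al i * s \<le> exp (- (al i * m))" for i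
  proof -
    have "1 - 2 * al i * s \<le> 1 + (- (al i * m))"
    proof -
      have "al i * m \<le> al i * s" using al_pos[of i] ms by (intro mult_left_mono) auto
      moreover have "0 \<le> al i * m" using al_pos[of i] m0 by simp
      ultimately show ?thesis by linarith
    qed
    also have "\<dots> \<le> exp (- (al i * m))" by (rule exp_ge_add_one_self)
    finally show ?thesis using alS[of i] by simp
  qed
  have f2: "0 \<le> 1 - al i * m \<and> 1 - al i * m \<le> exp (- (al i * m))" for i
  proof -
    have "al i * m \<le> al i * s" using al_pos[of i] ms by (intro mult_left_mono) auto
    moreover have "1 - al i * m \<le> exp (- (al i * m))" using exp_ge_add_one_self[of "- (al i * m)"] by simp
    moreover have "2 * (al i * s) \<le> 1" using alS[of i] by (simp add: mult.assoc)
    ultimately show ?thesis by linarith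
  qed
  have termb: "(\<Prod>i=j+1..n. 1 - 2 * al i * s) * (al j ^2 * C) * (\<Prod>i=k..<j. 1 - al i * m)
      \<le> (al j ^2 * C) * E" if j: "j \<in> {k..n}" for j
  proof -
    have P1: "(\<Prod>i=j+1..n. 1 - 2 * al i * s) \<le> exp (\<Sum>i=j+1..n. - (al i * m))"
      using f1 by (intro prod_exp_bound) auto
    have P2: "(\<Prod>i=k..<j. 1 - al i * m) \<le> exp (\<Sum>i=k..<j. - (al i * m))"
      using f2 by (intro prod_exp_bound) auto
    have P1n: "0 \<le> (\<Prod>i=j+1..n. 1 - 2 * al i * s)" using f1 by (intro prod_nonneg) auto
    have P2n: "0 \<le> (\<Prod>i=k..<j. 1 - al i * m)" using f2 by (intro prod_nonneg) auto
    have "(\<Prod>i=j+1..n. 1 - 2 * al i * s) * (\<Prod>i=k..<j. 1 - al i * m)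
        \<le> exp (\<Sum>i=j+1..n. - (al i * m)) * exp (\<Sum>i=k..<j. - (al i * m))"
      using P1 P2 P1n P2n by (intro mult_mono) auto
    also have "\<dots> = exp (- (a * m) * ((\<Sum>i=j+1..n. 1 / (b + real i)) + (\<Sum>i=k..<j. 1 / (b + real i))))"
    proof -
      have S: "(\<Sum>i\<in>I. - (al i * m)) = - (a*m) * (\<Sum>i\<in>I. 1/(b+real i))" for I
        unfolding sum_distrib_left by (rule sum.cong) (auto simp: al_def)
      show ?thesis unfolding S exp_add[symmetric] by (simp only: distrib_left)
    qed
    also have "\<dots> \<le> E"
    proof -
      have "ln (b + real n + 1) - ln (b + real k + 1)
          \<le> (\<Sum>i=j+1..n. 1 / (b + real i)) + (\<Sum>i=k..<j. 1 / (b + real i))"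
        using ln_tail1[OF b, of k j] ln_tail2[OF b, of j n] j by auto
      then show ?thesis unfolding E_def using a m0
        by (subst exp_le_cancel_iff) (intro mult_left_mono_neg; auto)
    qed
    finally have "(\<Prod>i=j+1..n. 1 - 2 * al i * s) * (\<Prod>i=k..<j. 1 - al i * m) \<le> E" .
    moreover have "0 \<le> al j ^2 * C" using C by simp
    ultimately have "(al j ^2 * C) * ((\<Prod>i=j+1..n. 1 - 2 * al i * s) * (\<Prod>i=k..<j. 1 - al i * m))
         \<le> (al j ^2 * C) * E" by (intro mult_left_mono)
    then show ?thesis by (simp add: algebra_simps)
  qed
  have "(\<Sum>j=k..n. (\<Prod>i=j+1..n. 1 - 2 * al i * s) * (al j ^2 * C) * (\<Prod>i=k..<j. 1 - al i * m))
      \<le> (\<Sum>j=k..n. (al j ^2 * C) * E)" by (intro sum_mono termb)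
  also have "\<dots> = a^2 * C * E * (\<Sum>j=k..n. 1 / (b + real j)^2)"
    by (simp add: al_def sum_distrib_left power_divide algebra_simps)
  also have "\<dots> \<le> a^2 * C * E * (1 / (b + real k - 1))"
  proof -
    have "(\<Sum>j=k..n. 1 / (b + real j)^2) \<le> 1 / (b + real k - 1)"
    proof -
      have "0 \<le> 1/(b+real n)" using b by simp
      then show ?thesis using sq_sum[OF b kn] by linarith
    qed
    moreover have "0 \<le> a^2 * C * E" using C unfolding E_def by simp
    ultimately show ?thesis by (intro mult_left_mono)
  qed
  also have "\<dots> = a^2 * C / (b + real k - 1) * ((b + real k + 1) / (b + real n + 1)) powr (a * m)"
  proof -
    have "((b + real k + 1) / (b + real n + 1)) powr (a * m) = E"
      unfolding E_def powr_def using b by (simp add: ln_div algebra_simps)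
    then show ?thesis by simp
  qed
  finally have X: "(\<Sum>j=k..n. (\<Prod>i=j+1..n. 1 - 2 * al i * s) * (al j ^2 * C) * (\<Prod>i=k..<j. 1 - al i * m))
      \<le> a^2 * C / (b + real k - 1) * ((b + real k + 1) / (b + real n + 1)) powr (a * m)" .
  then show ?thesis by (simp only: al_def)
qed



lemma cs_sum:
  fixes x y :: "nat \<Rightarrow> real"
  shows "(\<Sum>i\<in>I. x i * y i)^2 \<le> (\<Sum>i\<in>I. (x i)^2) * (\<Sum>i\<in>I. (y i)^2)"
proof -
  have "0 \<le> (\<Sum>i\<in>I. \<Sum>j\<in>I. (x i * y j - x j * y i)^2)" by (intro sum_nonneg) auto
  also have "\<dots> = (\<Sum>i\<in>I. \<Sum>j\<in>I. (x i)^2 * (y j)^2 + (y i)^2 * (x j)^2 - 2 * ((x i * y i) * (x j * y j)))"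
    by (intro sum.cong refl) (simp add: power2_eq_square algebra_simps)
  also have "\<dots> = (\<Sum>i\<in>I. \<Sum>j\<in>I. (x i)^2 * (y j)^2) + (\<Sum>i\<in>I. \<Sum>j\<in>I. (y i)^2 * (x j)^2)
      - (\<Sum>i\<in>I. \<Sum>j\<in>I. 2 * ((x i * y i) * (x j * y j)))"
    by (simp only: sum_subtractf sum.distrib)
  also have "\<dots> = (\<Sum>i\<in>I. (x i)^2) * (\<Sum>i\<in>I. (y i)^2) + (\<Sum>i\<in>I. (y i)^2) * (\<Sum>i\<in>I. (x i)^2)
      - 2 * ((\<Sum>i\<in>I. x i * y i) * (\<Sum>i\<in>I. x i * y i))"
    unfolding sum_product by (simp only: sum_distrib_left)
  also have "\<dots> = 2 * ((\<Sum>i\<in>I. (x i)^2) * (\<Sum>i\<in>I. (y i)^2) - (\<Sum>i\<in>I. x i * y i)^2)"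
    by (simp add: power2_eq_square algebra_simps)
  finally show ?thesis by simp
qed

lemma cs_vec:
  fixes v w :: "real vec"
  assumes "v \<in> carrier_vec n" "w \<in> carrier_vec n"
  shows "(v \<bullet> w)^2 \<le> (v \<bullet> v) * (w \<bullet> w)"
  using assms cs_sum[of "\<lambda>i. v $ i" "\<lambda>i. w $ i" "{0..<n}"]
  by (simp add: scalar_prod_def power2_eq_square)

lemma sv_bound:
  fixes A :: "real mat" and \<sigma> :: "nat \<Rightarrow> real"
  assumes dims: "A \<in> carrier_mat M N" and sv: "is_singular_values A M N \<sigma>"
    and N1: "1 \<le> N" and MN: "N \<le> M"
  shows "(\<sigma> 1)^2 \<le> real M * max_row_sq A"
proof -
  define S :: "real mat" where "S = mat M N (\<lambda>(i, j). if i = j then \<sigma> (i + 1) else 0)"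
  have ex: "\<exists>U V. U \<in> carrier_mat M M \<and> V \<in> carrier_mat N N \<and>
        transpose_mat U * U = 1\<^sub>m M \<and> transpose_mat V * V = 1\<^sub>m N \<and>
        A = U * S * transpose_mat V"
    using sv unfolding is_singular_values_def S_def by (elim conjE) assumption
  obtain U V where U: "U \<in> carrier_mat M M" and V: "V \<in> carrier_mat N N"
    and UU: "transpose_mat U * U = 1\<^sub>m M" and VV: "transpose_mat V * V = 1\<^sub>m N"
    and AD: "A = U * S * transpose_mat V"
    using ex by blast
  have Sc: "S \<in> carrier_mat M N" unfolding S_def by simp
  have N0: "0 < N" and M0: "0 < M" using N1 MN by auto
  have "A * V = U * S * (transpose_mat V * V)"
  proof -
    have US: "U * S \<in> carrier_mat M N" using U Sc by simp
    have VT: "transpose_mat V \<in> carrier_mat N N" using V by simp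
    show ?thesis unfolding AD by (rule assoc_mult_mat[OF US VT V])
  qed
  also have "\<dots> = U * S" unfolding VV using U Sc by simp
  finally have AV: "A * V = U * S" .
  define e where "e = col V 0"
  have ec: "e \<in> carrier_vec N" unfolding e_def using V by (intro carrier_vecI) auto
  have colS: "col S 0 = \<sigma> 1 \<cdot>\<^sub>v unit_vec M 0"
    by (rule eq_vecI) (use M0 N0 in \<open>auto simp: S_def\<close>)
  have Uunit: "U *\<^sub>v unit_vec M 0 = col U 0"
    by (rule eq_vecI) (use U M0 in auto)
  have "A *\<^sub>v e = col (A * V) 0" unfolding e_def by (rule col_mult2[OF dims V N0, symmetric])
  also have "\<dots> = U *\<^sub>v col S 0" unfolding AV by (rule col_mult2[OF U Sc N0])
  also have "\<dots> = \<sigma> 1 \<cdot>\<^sub>v col U 0" unfolding colS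
    using mult_mat_vec[OF U, of "unit_vec M 0" "\<sigma> 1"] Uunit by simp
  finally have Ae: "A *\<^sub>v e = \<sigma> 1 \<cdot>\<^sub>v col U 0" .
  have uu: "col U 0 \<bullet> col U 0 = 1"
  proof -
    have "(transpose_mat U * U) $$ (0,0) = col U 0 \<bullet> col U 0" using U M0 by simp
    then show ?thesis unfolding UU using M0 by simp
  qed
  have ee: "e \<bullet> e = 1"
  proof -
    have "(transpose_mat V * V) $$ (0,0) = col V 0 \<bullet> col V 0" using V N0 by simp
    then show ?thesis unfolding VV e_def using N0 by simp
  qed
  have cU: "col U 0 \<in> carrier_vec M" using U by (intro carrier_vecI) auto
  have "(\<sigma> 1)^2 = (A *\<^sub>v e) \<bullet> (A *\<^sub>v e)"
    unfolding Ae using cU uu by (simp add: power2_eq_square)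
  also have "\<dots> = (\<Sum>i\<in>{0..<M}. (row A i \<bullet> e)^2)"
    using dims by (simp add: scalar_prod_def power2_eq_square)
  also have "\<dots> \<le> (\<Sum>i\<in>{0..<M}. max_row_sq A)"
  proof (rule sum_mono)
    fix i assume i: "i \<in> {0..<M}"
    have ri: "row A i \<in> carrier_vec N" using dims i by auto
    have "(row A i \<bullet> e)^2 \<le> (row A i \<bullet> row A i) * (e \<bullet> e)" by (rule cs_vec[OF ri ec])
    also have "\<dots> = row A i \<bullet> row A i" using ee by simp
    also have "\<dots> \<le> max_row_sq A" unfolding max_row_sq_def using dims i by (intro Max_ge) auto
    finally show "(row A i \<bullet> e)^2 \<le> max_row_sq A" .
  qed
  also have "\<dots> = real M * max_row_sq A" by simp
  finally show ?thesis .
qed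

theorem lemma15:
  fixes A :: "real mat" and M N l :: nat and \<sigma> :: "nat \<Rightarrow> real"
    and a b :: real and n k :: nat
  assumes dims: "A \<in> carrier_mat M N" and MN: "N \<le> M"
    and rank: "full_column_rank A"
    and sv: "is_singular_values A M N \<sigma>"
    and ell: "1 \<le> l" "l \<le> N"
    and a_pos: "a > 0" and b_gt: "b > 1"
    and ab: "a / b \<le> 1 / (2 * real M * max_row_sq A)"
    and kn: "k \<le> n"
  shows
    "let smax = \<sigma> 1; smin = \<sigma> N; L = max_row_sq A; c = smax\<^sup>2 / smin\<^sup>2;
         Af = (\<lambda>\<alpha>. 1 - 2 * \<alpha> * (\<sigma> l)\<^sup>2);
         Bf = (\<lambda>\<alpha>. \<alpha>\<^sup>2 * real M * L * c * smax\<^sup>2);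
         pf = (\<lambda>\<alpha>. 1 - \<alpha> * smin\<^sup>2);
         \<alpha> = (\<lambda>j. a / (b + real j))
     in Bsum \<alpha> Af Bf pf n k
        \<le> a\<^sup>2 * real M * L * c * smax\<^sup>2 / (b + real k - 1)
          * ((b + real k + 1) / (b + real n + 1)) powr (a * smin\<^sup>2)"
  proof -
  define smax where "smax = \<sigma> 1"
  define smin where "smin = \<sigma> N"
  define L where "L = max_row_sq A"
  define c where "c = smax\<^sup>2 / smin\<^sup>2"
  have N1: "1 \<le> N" using ell by simp
  have sv': "\<And>i j. 1 \<le> i \<Longrightarrow> i \<le> j \<Longrightarrow> j \<le> N \<Longrightarrow> \<sigma> j \<le> \<sigma> i"
    and sv0: "\<And>i. 1 \<le> i \<Longrightarrow> i \<le> N \<Longrightarrow> 0 \<le> \<sigma> i"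
    using sv unfolding is_singular_values_def by auto
  have b1: "(\<sigma> 1)^2 \<le> real M * L" unfolding L_def by (rule sv_bound[OF dims sv N1 MN])
  have sl0: "0 \<le> \<sigma> l" using sv0 ell by auto
  have sN0: "0 \<le> \<sigma> N" using sv0 N1 by auto
  have sl1: "\<sigma> l \<le> \<sigma> 1" using sv' ell by auto
  have sNl: "\<sigma> N \<le> \<sigma> l" using sv' ell by auto
  have sl2: "(\<sigma> l)^2 \<le> real M * L"
    using b1 power_mono[OF sl1 sl0, of 2] by linarith
  have ms: "(\<sigma> N)^2 \<le> (\<sigma> l)^2" using power_mono[OF sNl sN0, of 2] .
  have abpos: "a / b > 0" using a_pos b_gt by simp
  have MLpos: "real M * L > 0"
  proof (rule ccontr)
    assume "\<not> real M * L > 0"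
    then have h: "real M * L \<le> 0" by linarith
    have "2 * real M * L = 2 * (real M * L)" by (simp only: mult.assoc)
    then have "2 * real M * L \<le> 0" using h by linarith
    then have "1 / (2 * real M * L) \<le> 0" by (intro divide_nonneg_nonpos) auto
    then show False using ab abpos unfolding L_def by linarith
  qed
  have sb: "2 * (a / b) * (\<sigma> l)^2 \<le> 1"
  proof -
    have "2 * (a / b) * (\<sigma> l)^2 \<le> 2 * (1 / (2 * real M * L)) * (real M * L)"
    proof -
      have abL: "a/b \<le> 1/(2*real M*L)" using ab unfolding L_def .
      show ?thesis using abL abpos sl2 MLpos by (intro mult_mono) auto
    qed
    also have "\<dots> = 1"
    proof -
      have gen: "\<And>x::real. x > 0 \<Longrightarrow> 2 * (1/(2*x)) * x = 1" by (simp add: field_simps)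
      have "2 * real M * L = 2 * (real M * L)" by (simp only: mult.assoc)
      then show ?thesis using gen[OF MLpos] by simp
    qed
    finally show ?thesis .
  qed
  have L0: "L \<ge> 0" using MLpos by (simp add: zero_less_mult_iff)
  have C0: "real M * L * c * smax\<^sup>2 \<ge> 0" unfolding c_def using L0 by simp
  note key = main_bound[OF a_pos b_gt zero_le_power2[of "\<sigma> N"] ms sb C0 kn]
  show ?thesis
    unfolding Let_def Bsum_def smax_def[symmetric] smin_def[symmetric] L_def[symmetric] c_def[symmetric]
    using key unfolding smin_def[symmetric] by (simp only: mult.assoc)
qed

end
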